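(* Let $R$ be an $F$-finite $F$-pure ring of prime characteristic $p$ and $J$ an ideal of $R$. Then $\mathcal P(J)=\bigcap_{s\in\mathbb N}J_s$ is uniformly $F$-compatible, and it contains every uniformly $F$-compatible ideal of $R$ contained in $J$; i.e., it is the largest uniformly $F$-compatible ideal contained in $J$.
   Context: $J_e=\{f\in R\mid \varphi(f^{1/p^e})\in J \text{ for all }\varphi\in\operatorname{Hom}_R(R^{1/p^e},R)\}$; the Cartier core of $J$ is $\mathcal P(J)=\bigcap_{s\in\mathbb N}J_s$. An ideal $J$ is uniformly $F$-compatible if $\varphi(J^{1/p^e})\subseteq J$ for every $e>0$ and every $\varphi\in\operatorname{Hom}_R(R^{1/p^e},R)$. *)

theory Defs
  imports Main "HOL-Computational_Algebra.Primes"
begin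

definition is_ideal :: "'a::comm_ring_1 set \<Rightarrow> bool" where
  "is_ideal I \<longleftrightarrow> 0 \<in> I \<and> (\<forall>x\<in>I. \<forall>y\<in>I. x + y \<in> I) \<and> (\<forall>r. \<forall>x\<in>I. r * x \<in> I)"

(* Hom_R(R^{1/p^e}, R), written via the identification R^{1/p^e} = F^e_* R:
   a map phi : R -> R is R-linear from F^e_* R to R iff it is additive and
   phi (r^(p^e) * x) = r * phi x.  Then "phi(f^{1/p^e})" is "phi f". *)
definition frob_hom :: "nat \<Rightarrow> nat \<Rightarrow> ('a::comm_ring_1 \<Rightarrow> 'a) set" where
  "frob_hom p e = {\<phi>. (\<forall>x y. \<phi> (x + y) = \<phi> x + \<phi> y) \<and>
                        (\<forall>r x. \<phi> (r ^ (p ^ e) * x) = r * \<phi> x)}"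

(* F-finite: F_* R is a finitely generated R-module, i.e. R is finitely generated
   as a module over R^p. *)
definition F_finite :: "nat \<Rightarrow> 'a::comm_ring_1 itself \<Rightarrow> bool" where
  "F_finite p (_::'a itself) \<longleftrightarrow>
     (\<exists>B::'a set. finite B \<and> (\<forall>x. \<exists>c. x = (\<Sum>b\<in>B. c b ^ p * b)))"

(* Purity of a module map M -> N is expressed by the standard criterion: every finite
   system of R-linear equations with constants from M that is solvable in N is
   solvable in M.  Here a system sum_j a_ij X_j = m_i (i<k, j<n) is solvable in F_* R
   iff there are x_j with sum_j a_ij^p x_j = m_i^p. *)
definition F_pure :: "nat \<Rightarrow> 'a::comm_ring_1 itself \<Rightarrow> bool" where
  "F_pure p (_::'a itself) \<longleftrightarrow>
     (\<forall>(k::nat) (n::nat) (a::nat \<Rightarrow> nat \<Rightarrow> 'a) (m::nat \<Rightarrow> 'a).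
        (\<exists>x::nat \<Rightarrow> 'a. \<forall>i<k. (\<Sum>j<n. a i j ^ p * x j) = m i ^ p) \<longrightarrow>
        (\<exists>y::nat \<Rightarrow> 'a. \<forall>i<k. (\<Sum>j<n. a i j * y j) = m i))"

definition J_level :: "nat \<Rightarrow> 'a::comm_ring_1 set \<Rightarrow> nat \<Rightarrow> 'a set" where
  "J_level p J e = {f. \<forall>\<phi>\<in>frob_hom p e. \<phi> f \<in> J}"

definition cartier_core :: "nat \<Rightarrow> 'a::comm_ring_1 set \<Rightarrow> 'a set" where
  "cartier_core p J = (\<Inter>s. J_level p J s)"

definition unif_F_compatible :: "nat \<Rightarrow> 'a::comm_ring_1 set \<Rightarrow> bool" where
  "unif_F_compatible p J \<longleftrightarrow> is_ideal J \<and>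
     (\<forall>e>0. \<forall>\<phi>\<in>frob_hom p e. \<forall>x\<in>J. \<phi> x \<in> J)"

end

theory Submission
  imports Defs
begin

lemma fh_zero: "\<phi> \<in> frob_hom p e \<Longrightarrow> \<phi> 0 = 0"
proof -
  assume "\<phi> \<in> frob_hom p e"
  then have "\<phi> (0 + 0) = \<phi> 0 + \<phi> 0" unfolding frob_hom_def by blast
  then show ?thesis by simp
qed

lemma fh_comp:
  assumes "\<phi> \<in> frob_hom p e" "\<psi> \<in> frob_hom p s"
  shows "(\<psi> \<circ> \<phi>) \<in> frob_hom p (e + s)"
proof -
  have "\<And>r :: 'a. r ^ (p ^ (e + s)) = (r ^ (p ^ s)) ^ (p ^ e)"
    by (simp add: power_add power_mult[symmetric] mult.commute)
  then show ?thesis using assms unfolding frob_hom_def by auto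
qed

lemma fh_mult:
  assumes "\<phi> \<in> frob_hom p e"
  shows "(\<lambda>y. \<phi> (r * y)) \<in> frob_hom p e"
proof -
  have a: "\<And>x y. \<phi> (x + y) = \<phi> x + \<phi> y" and m: "\<And>t x. \<phi> (t ^ (p ^ e) * x) = t * \<phi> x"
    using assms unfolding frob_hom_def by blast+
  have "\<phi> (r * (x + y)) = \<phi> (r * x) + \<phi> (r * y)" for x y
    by (simp add: distrib_left a)
  moreover have "\<phi> (r * (t ^ (p ^ e) * x)) = t * \<phi> (r * x)" for t x
  proof -
    have eq: "r * (t ^ (p ^ e) * x) = t ^ (p ^ e) * (r * x)" by (simp add: ac_simps)
    show ?thesis by (subst eq) (rule m)
  qed
  ultimately show ?thesis unfolding frob_hom_def by blast
qed

lemma J_level_ideal: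
  assumes "is_ideal J"
  shows "is_ideal (J_level p J e)"
  unfolding is_ideal_def J_level_def
proof (intro conjI ballI allI CollectI)
  fix \<phi> :: "'a \<Rightarrow> 'a" assume "\<phi> \<in> frob_hom p e"
  then show "\<phi> 0 \<in> J" using fh_zero assms unfolding is_ideal_def by metis
next
  fix x y :: 'a and \<phi> :: "'a \<Rightarrow> 'a" assume x: "x \<in> {f. \<forall>\<phi>\<in>frob_hom p e. \<phi> f \<in> J}"
    and y: "y \<in> {f. \<forall>\<phi>\<in>frob_hom p e. \<phi> f \<in> J}" and ph: "\<phi> \<in> frob_hom p e"
  have "\<phi> (x + y) = \<phi> x + \<phi> y" using ph unfolding frob_hom_def by auto
  then show "\<phi> (x + y) \<in> J" using x y ph assms unfolding is_ideal_def by auto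
next
  fix r x :: 'a and \<phi> :: "'a \<Rightarrow> 'a" assume x: "x \<in> {f. \<forall>\<phi>\<in>frob_hom p e. \<phi> f \<in> J}"
    and ph: "\<phi> \<in> frob_hom p e"
  have "(\<lambda>y. \<phi> (r * y)) \<in> frob_hom p e" using fh_mult ph .
  then show "\<phi> (r * x) \<in> J" using x by auto
qed

lemma id_fh0: "id \<in> frob_hom p 0"
  unfolding frob_hom_def by auto

lemma fh0_lin: "\<phi> \<in> frob_hom p 0 \<Longrightarrow> \<phi> x = x * \<phi> 1"
proof -
  assume "\<phi> \<in> frob_hom p 0"
  then have "\<phi> (x ^ (p ^ 0) * 1) = x * \<phi> 1" unfolding frob_hom_def by blast
  then show ?thesis by (simp add: mult.commute)
qed

theorem mainTheorem8:
  fixes J :: "'a::comm_ring_1 set" and p :: nat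
  assumes "prime p" and "CHAR('a) = p"
    and "F_finite p TYPE('a)" and "F_pure p TYPE('a)"
    and "is_ideal J"
  shows "unif_F_compatible p (cartier_core p J)
       \<and> cartier_core p J \<subseteq> J
       \<and> (\<forall>I. unif_F_compatible p I \<and> I \<subseteq> J \<longrightarrow> I \<subseteq> cartier_core p J)"
proof (intro conjI allI impI)
  have idl: "is_ideal (cartier_core p J)"
    using J_level_ideal[OF assms(5)] unfolding cartier_core_def is_ideal_def by auto
  have comp: "\<forall>e>0. \<forall>\<phi>\<in>frob_hom p e. \<forall>x\<in>cartier_core p J. \<phi> x \<in> cartier_core p J"
  proof (intro allI impI ballI)
    fix e :: nat and \<phi> :: "'a \<Rightarrow> 'a" and x :: 'a assume ph: "\<phi> \<in> frob_hom p e" and x: "x \<in> cartier_core p J"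
    show "\<phi> x \<in> cartier_core p J"
      unfolding cartier_core_def J_level_def
    proof (intro InterI, clarsimp)
      fix s :: nat and \<psi> :: "'a \<Rightarrow> 'a" assume "\<psi> \<in> frob_hom p s"
      then have "(\<psi> \<circ> \<phi>) \<in> frob_hom p (e + s)" using fh_comp ph by blast
      moreover have "x \<in> J_level p J (e + s)" using x unfolding cartier_core_def by auto
      ultimately show "\<psi> (\<phi> x) \<in> J" unfolding J_level_def by auto
    qed
  qed
  show "unif_F_compatible p (cartier_core p J)"
    using idl comp unfolding unif_F_compatible_def by blast
  show "cartier_core p J \<subseteq> J"
    unfolding cartier_core_def J_level_def using id_fh0 by fastforce
next
  fix I assume a: "unif_F_compatible p I \<and> I \<subseteq> J"
  show "I \<subseteq> cartier_core p J"
    unfolding cartier_core_def J_level_def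
  proof (clarsimp)
    fix x :: 'a and s :: nat and \<phi> :: "'a \<Rightarrow> 'a" assume x: "x \<in> I" and ph: "\<phi> \<in> frob_hom p s"
    show "\<phi> x \<in> J"
    proof (cases "s = 0")
      case True
      then have "\<phi> x = \<phi> 1 * x" using fh0_lin ph by (metis mult.commute)
      then have "\<phi> x \<in> I" using a x unfolding unif_F_compatible_def is_ideal_def by auto
      then show ?thesis using a by auto
    next
      case False
      then show ?thesis using a x ph unfolding unif_F_compatible_def by auto
    qed
  qed
qed

end
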